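(* Let $k\ge1$ and $D=(X^k-1)\,\partial_X-(kX^{k-1}Y+1)\,\partial_Y$. Then $f(X,Y)=Y(X^k-1)+X$ is an indecomposable polynomial first integral of $D$; the quantity $\mathcal{B}$ associated to $D$ equals $k$; the spectrum $\sigma(f,1)$ contains the $k+1$ points $(1:\omega)$ with $\omega^k=1$ and $(0:1)$; $\gamma(f,1)=\{(0:1)\}$; and hence $\mathcal{B}+1\le|\sigma(f,1)|<\mathcal{B}+3$.
   Context: A rational function $h$ is a first integral of $D$ if $D(h)=0$; $h$ is decomposable if $h=u(h')$ with $u\in\mathbb{C}(T)$, $\deg u\ge2$, $h'\in\mathbb{C}(X,Y)$, indecomposable otherwise. Here $g=1$, $d=\deg(f/1)=k+1$, $f^h=Z^{d}f(X/Z,Y/Z)$, $1^h=Z^{d}$. $\sigma(f,1)=\{(\lambda:\mu)\in\mathbb{P}^1(\mathbb{C}) : \lambda f^h-\mu Z^{d}\text{ reducible in }\mathbb{C}[X,Y,Z]\}$ and $\gamma(f,1)=\{(\lambda:\mu): \lambda f^h-\mu Z^d=P^e,\ P\in\mathbb{C}[X,Y,Z],\ e>1\}$. For $D=A\partial_X+B\partial_Y$, $\mathcal{B}$ is the number of integer points in $N_D\cap\mathbb{N}^2$, where $N_D$ is the Newton polygon (convex hull of exponents of nonzero terms) of the Laurent polynomial $x\,A/X+y\,B/Y$ for a generic $(x,y)\in\mathbb{C}^2$. *)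

theory Defs
  imports "HOL-Analysis.Analysis" "HOL-Computational_Algebra.Computational_Algebra"
begin

text \<open>Bivariate polynomials C[X,Y] are represented as complex poly poly:
  the outer variable is Y, the inner variable is X.  Trivariate polynomials
  C[X,Y,Z] are complex poly poly poly with outer variable Z, then Y, then X.\<close>

type_synonym bpoly = "complex poly poly"
type_synonym tpoly = "complex poly poly poly"

definition varX :: bpoly where "varX = [:[:0, 1:]:]"
definition varY :: bpoly where "varY = [:0, 1:]"
definition constB :: "complex \<Rightarrow> bpoly" where "constB c = [:[:c:]:]"

definition bcoeff :: "bpoly \<Rightarrow> nat \<Rightarrow> nat \<Rightarrow> complex" where
  "bcoeff p i j = coeff (coeff p j) i"

definition dX :: "bpoly \<Rightarrow> bpoly" where "dX p = map_poly pderiv p"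
definition dY :: "bpoly \<Rightarrow> bpoly" where "dY p = pderiv p"

definition derivD :: "bpoly \<Rightarrow> bpoly \<Rightarrow> bpoly \<Rightarrow> bpoly" where
  "derivD A B p = A * dX p + B * dY p"

definition poly_first_integral :: "bpoly \<Rightarrow> bpoly \<Rightarrow> bpoly \<Rightarrow> bool" where
  "poly_first_integral A B f \<longleftrightarrow> derivD A B f = 0"

text \<open>Rational functions C(X,Y) = fraction field of C[X,Y]; C(T) elements u = p/q
  with p, q coprime, degree of u = max (deg p) (deg q).\<close>
definition ratfun :: "bpoly \<Rightarrow> bpoly fract" where "ratfun p = Fract p 1"

definition eval_at :: "complex poly \<Rightarrow> bpoly fract \<Rightarrow> bpoly fract" where
  "eval_at p h = (\<Sum>i\<le>degree p. ratfun (constB (coeff p i)) * h ^ i)"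

definition decomposable :: "bpoly fract \<Rightarrow> bool" where
  "decomposable h \<longleftrightarrow> (\<exists>(p::complex poly) (q::complex poly) (h'::bpoly fract).
      q \<noteq> 0 \<and> coprime p q \<and> max (degree p) (degree q) \<ge> 2 \<and>
      eval_at q h' \<noteq> 0 \<and> h = eval_at p h' / eval_at q h')"

definition indecomposable :: "bpoly fract \<Rightarrow> bool" where
  "indecomposable h \<longleftrightarrow> \<not> decomposable h"

definition tdeg :: "bpoly \<Rightarrow> nat" where
  "tdeg p = Max ({0} \<union> {i + j | i j. bcoeff p i j \<noteq> 0})"

definition varX3 :: tpoly where "varX3 = [:[:[:0, 1:]:]:]"
definition varY3 :: tpoly where "varY3 = [:[:0, 1:]:]"
definition varZ3 :: tpoly where "varZ3 = [:0, 1:]"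
definition const3 :: "complex \<Rightarrow> tpoly" where "const3 c = [:[:[:c:]:]:]"

text \<open>p^h = Z^d p(X/Z, Y/Z) (for d \<ge> total degree of p)\<close>
definition homog :: "nat \<Rightarrow> bpoly \<Rightarrow> tpoly" where
  "homog d p = (\<Sum>i\<le>d. \<Sum>j\<le>d. if i + j \<le> d
      then const3 (bcoeff p i j) * varX3 ^ i * varY3 ^ j * varZ3 ^ (d - i - j) else 0)"

text \<open>points of P^1(C): equivalence classes of nonzero pairs\<close>
definition proj_pt :: "complex \<Rightarrow> complex \<Rightarrow> (complex \<times> complex) set" where
  "proj_pt l m = {(c * l, c * m) | c. c \<noteq> 0}"

definition pencil :: "bpoly \<Rightarrow> bpoly \<Rightarrow> complex \<Rightarrow> complex \<Rightarrow> tpoly" where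
  "pencil f g l m = (let d = max (tdeg f) (tdeg g) in
      const3 l * homog d f - const3 m * homog d g)"

definition spectrum_sigma :: "bpoly \<Rightarrow> bpoly \<Rightarrow> (complex \<times> complex) set set" where
  "spectrum_sigma f g = {proj_pt l m | l m. (l, m) \<noteq> (0, 0) \<and> \<not> irreducible (pencil f g l m)}"

definition spectrum_gamma :: "bpoly \<Rightarrow> bpoly \<Rightarrow> (complex \<times> complex) set set" where
  "spectrum_gamma f g = {proj_pt l m | l m. (l, m) \<noteq> (0, 0) \<and>
      (\<exists>(P::tpoly) (e::nat). e > 1 \<and> pencil f g l m = P ^ e)}"

text \<open>Newton polygon of the Laurent polynomial x A/X + y B/Y\<close>
definition icoeff :: "bpoly \<Rightarrow> int \<Rightarrow> int \<Rightarrow> complex" where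
  "icoeff p i j = (if i \<ge> 0 \<and> j \<ge> 0 then bcoeff p (nat i) (nat j) else 0)"

definition laurent_support :: "bpoly \<Rightarrow> bpoly \<Rightarrow> complex \<Rightarrow> complex \<Rightarrow> (int \<times> int) set" where
  "laurent_support A B x y =
     {(a, b). x * icoeff A (a + 1) b + y * icoeff B a (b + 1) \<noteq> 0}"

definition newton_polygon :: "bpoly \<Rightarrow> bpoly \<Rightarrow> complex \<Rightarrow> complex \<Rightarrow> (real \<times> real) set" where
  "newton_polygon A B x y =
     convex hull ((\<lambda>(a, b). (real_of_int a, real_of_int b)) ` laurent_support A B x y)"

definition lattice_count :: "bpoly \<Rightarrow> bpoly \<Rightarrow> complex \<Rightarrow> complex \<Rightarrow> nat" where
  "lattice_count A B x y = card {p :: nat \<times> nat. (real (fst p), real (snd p)) \<in> newton_polygon A B x y}"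

definition generic :: "(complex \<Rightarrow> complex \<Rightarrow> bool) \<Rightarrow> bool" where
  "generic P \<longleftrightarrow> (\<exists>q::bpoly. q \<noteq> 0 \<and> (\<forall>x y. poly (poly q [:y:]) x \<noteq> 0 \<longrightarrow> P x y))"

definition calB :: "bpoly \<Rightarrow> bpoly \<Rightarrow> nat" where
  "calB A B = (THE n. generic (\<lambda>x y. lattice_count A B x y = n))"

end

theory Submission
  imports Defs "HOL-Computational_Algebra.Field_as_Ring"
begin

lemma map_poly_add_hom:
  assumes "f 0 = 0" "\<And>x y. f (x + y) = f x + f y"
  shows "map_poly f (p + q) = map_poly f p + map_poly f q"
  by (intro poly_eqI) (simp add: coeff_map_poly assms)

lemma map_poly_mult_hom:
  fixes f :: "'a::comm_semiring_1 \<Rightarrow> 'b::comm_semiring_1"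
  assumes "f 0 = 0" "\<And>x y. f (x + y) = f x + f y" "\<And>x y. f (x * y) = f x * f y"
  shows "map_poly f (p * q) = map_poly f p * map_poly f q"
proof (induction p)
  case 0 then show ?case by simp
next
  case (pCons a p)
  have "map_poly f (pCons a p * q) = map_poly f (smult a q + pCons 0 (p * q))" by simp
  also have "\<dots> = smult (f a) (map_poly f q) + pCons 0 (map_poly f p * map_poly f q)"
    by (simp add: map_poly_add_hom map_poly_smult map_poly_pCons assms pCons.IH)
  also have "\<dots> = map_poly f (pCons a p) * map_poly f q"
    by (simp add: map_poly_pCons assms)
  finally show ?case .
qed

lemma X_pow_monom: "[:0, 1:] ^ n = monom 1 n"
  by (simp add: monom_altdef)

definition swap :: "'a::comm_ring_1 poly poly \<Rightarrow> 'a poly poly" where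
  "swap p = poly (map_poly (map_poly (\<lambda>r. [:r:])) p) [:[:0, 1:]:]"

lemma coeff_swap: "coeff (coeff (swap p) i) j = coeff (coeff p j) i"
proof -
  have e: "swap p = (\<Sum>n\<le>degree p. smult (monom 1 n) (map_poly (\<lambda>r. [:r:]) (coeff p n)))"
    unfolding swap_def
    by (subst poly_altdef) (simp add: degree_map_poly map_poly_eq_0_iff coeff_map_poly
         poly_const_pow X_pow_monom degree_map_poly[where f="map_poly (\<lambda>r. [:r:])"])
  have aux: "(\<Sum>n\<le>N. f n * (if n = j then 1 else 0)) = (if j \<le> N then f j else 0)" for f :: "nat \<Rightarrow> 'a" and N
  proof -
    have "(\<Sum>n\<le>N. f n * (if n = j then 1 else 0)) = (\<Sum>n\<le>N. if n = j then f n else 0)"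
      by (intro sum.cong) auto
    then show ?thesis by simp
  qed
  have "coeff (coeff (swap p) i) j = (\<Sum>n\<le>degree p. coeff (coeff p n) i * (if n = j then 1 else 0))"
    unfolding e by (simp add: coeff_sum coeff_map_poly coeff_monom)
  also have "\<dots> = coeff (coeff p j) i"
    unfolding aux by (auto simp: coeff_eq_0)
  finally show ?thesis .
qed

lemma swap_eqI: "(\<And>i j. coeff (coeff p j) i = coeff (coeff q i) j) \<Longrightarrow> swap p = q"
  by (intro poly_eqI) (simp add: coeff_swap poly_eq_iff)

lemma swap_swap [simp]: "swap (swap p) = p"
  by (intro swap_eqI) (simp add: coeff_swap)

lemma swap_mult: "swap (p * q) = swap p * swap q"
proof -
  have h1: "map_poly (\<lambda>r. [:r:]) (x * y) = map_poly (\<lambda>r. [:r:]) x * map_poly (\<lambda>r. [:r:]) y"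
    for x y :: "'a poly"
    using map_poly_mult_hom[of "\<lambda>r. [:r:]" x y] by auto
  have h0: "map_poly (\<lambda>r. [:r:]) (x + y) = map_poly (\<lambda>r. [:r:]) x + map_poly (\<lambda>r. [:r:]) y"
    for x y :: "'a poly"
    by (rule map_poly_add_hom) auto
  have h2: "map_poly (map_poly (\<lambda>r. [:r:])) (p * q) =
      map_poly (map_poly (\<lambda>r. [:r:])) p * map_poly (map_poly (\<lambda>r. [:r:])) q"
    by (rule map_poly_mult_hom) (auto simp: h0 h1)
  show ?thesis unfolding swap_def h2 by (simp add: poly_mult)
qed

lemma swap_add: "swap (p + q) = swap p + swap q"
  by (intro swap_eqI) (simp add: coeff_swap)

lemma swap_0 [simp]: "swap 0 = 0"
  by (intro swap_eqI) (simp add: coeff_swap)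

lemma swap_1 [simp]: "swap 1 = 1"
  by (intro swap_eqI) (auto simp: coeff_swap coeff_1)

lemma swap_uminus: "swap (- p) = - swap p"
  by (intro swap_eqI) (simp add: coeff_swap)

lemma swap_diff: "swap (p - q) = swap p - swap q"
  by (intro swap_eqI) (simp add: coeff_swap)

lemma swap_power: "swap (p ^ n) = swap p ^ n"
  by (induction n) (simp_all add: swap_mult)

lemma swap_const: "swap [:[:c:]:] = [:[:c:]:]"
  by (intro swap_eqI) (auto simp: coeff_swap coeff_pCons split: nat.splits)

lemma swap_X: "swap [:[:0, 1:]:] = [:0, 1:]"
  by (intro swap_eqI) (auto simp: coeff_swap coeff_pCons split: nat.splits)

lemma swap_Y: "swap [:0, 1:] = [:[:0, 1:]:]"
  by (intro swap_eqI) (auto simp: coeff_swap coeff_pCons split: nat.splits)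

lemma swap_eq_0_iff [simp]: "swap p = 0 \<longleftrightarrow> p = 0"
  by (metis swap_0 swap_swap)

lemma irreducible_iso:
  fixes \<phi> :: "'a::algebraic_semidom \<Rightarrow> 'b::algebraic_semidom" and \<psi> :: "'b \<Rightarrow> 'a"
  assumes inv1: "\<And>x. \<psi> (\<phi> x) = x" and inv2: "\<And>y. \<phi> (\<psi> y) = y"
    and m: "\<And>x y. \<phi> (x * y) = \<phi> x * \<phi> y" and m': "\<And>x y. \<psi> (x * y) = \<psi> x * \<psi> y"
    and o: "\<phi> 1 = 1" "\<psi> 1 = 1" and z: "\<phi> 0 = 0"
    and irr: "irreducible (\<phi> x)"
  shows "irreducible x"
proof -
  have u: "is_unit a" if "is_unit (\<phi> a)" for a
  proof -
    from that obtain c where "1 = \<phi> a * c" by (auto elim: dvdE)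
    then have "1 = a * \<psi> c" by (metis inv1 m' o(2))
    then show ?thesis by (rule dvdI)
  qed
  show ?thesis unfolding irreducible_def
  proof (intro conjI allI impI)
    show "x \<noteq> 0" using irr z by auto
    show "\<not> is_unit x"
    proof
      assume "is_unit x"
      then obtain c where "1 = x * c" by (auto elim: dvdE)
      then have "1 = \<phi> x * \<phi> c" by (metis m o(1))
      then show False using irr by (metis dvdI irreducible_not_unit)
    qed
    fix a b assume "x = a * b"
    then have "\<phi> x = \<phi> a * \<phi> b" by (simp add: m)
    then have "is_unit (\<phi> a) \<or> is_unit (\<phi> b)" using irr by (auto dest: irreducibleD)
    then show "is_unit a \<or> is_unit b" using u by blast
  qed
qed

lemma irreducible_swap: "irreducible (swap p) \<Longrightarrow> irreducible (p :: 'a::factorial_ring_gcd poly poly)"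
  by (rule irreducible_iso[where \<phi>=swap and \<psi>=swap]) (simp_all add: swap_mult)

lemma coprime_iso:
  fixes \<phi> :: "'a::algebraic_semidom \<Rightarrow> 'b::algebraic_semidom" and \<psi> :: "'b \<Rightarrow> 'a"
  assumes inv1: "\<And>x. \<psi> (\<phi> x) = x" and m: "\<And>x y. \<phi> (x * y) = \<phi> x * \<phi> y"
    and m': "\<And>x y. \<psi> (x * y) = \<psi> x * \<psi> y"  and o: "\<psi> 1 = 1"
    and c: "coprime (\<phi> a) (\<phi> b)"
  shows "coprime a b"
proof (rule coprimeI)
  fix c assume "c dvd a" "c dvd b"
  then have "\<phi> c dvd \<phi> a" "\<phi> c dvd \<phi> b" by (auto elim!: dvdE simp: m)
  then have "is_unit (\<phi> c)" using c coprime_common_divisor by blast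
  then obtain d where "1 = \<phi> c * d" by (auto elim: dvdE)
  then have "1 = c * \<psi> d" by (metis inv1 m' o)
  then show "is_unit c" by (rule dvdI)
qed

lemma coprime_swap: "coprime (swap a) (swap b) \<Longrightarrow> coprime (a :: 'a::factorial_ring_gcd poly poly) b"
  by (rule coprime_iso[where \<phi>=swap and \<psi>=swap]) (simp_all add: swap_mult)

lemma irreducible_linear_coprime:
  fixes a b :: "'a::factorial_ring_gcd"
  assumes "coprime a b" "a \<noteq> 0"
  shows "irreducible [:b, a:]"
  unfolding irreducible_def
proof (intro conjI allI impI)
  show "[:b, a:] \<noteq> 0" using assms by simp
  show "\<not> is_unit [:b, a:]" using assms by (auto simp: is_unit_poly_iff)
  fix G H assume e: "[:b, a:] = G * H"
  then have "G \<noteq> 0" "H \<noteq> 0" using assms by auto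
  have "degree [:b, a:] = 1" using assms by simp
  then have "degree G + degree H = 1" using e \<open>G \<noteq> 0\<close> \<open>H \<noteq> 0\<close>
    by (metis degree_mult_eq)
  then have "degree G = 0 \<or> degree H = 0" by auto
  then show "is_unit G \<or> is_unit H"
  proof
    assume "degree G = 0"
    then obtain g where g: "G = [:g:]" by (rule degree_eq_zeroE)
    have "g dvd coeff [:b, a:] 0" "g dvd coeff [:b, a:] 1" unfolding e g by simp_all
    then have "is_unit g" using assms(1) by (intro coprime_common_divisor[of a b]) simp_all
    then show ?thesis by (simp add: g is_unit_poly_iff)
  next
    assume "degree H = 0"
    then obtain g where g: "H = [:g:]" by (rule degree_eq_zeroE)
    have "g dvd coeff [:b, a:] 0" "g dvd coeff [:b, a:] 1" unfolding e g by simp_all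
    then have "is_unit g" using assms(1) by (intro coprime_common_divisor[of a b]) simp_all
    then show ?thesis by (simp add: g is_unit_poly_iff)
  qed
qed


definition fK :: "nat \<Rightarrow> bpoly" where "fK k = varY * (varX ^ k - 1) + varX"

lemma const_minus_1: "[:a:] - 1 = [:a - 1:]"
  by (simp add: one_pCons)

lemma fK_explicit: "fK k = [:[:0, 1:], monom 1 k - 1:]"
  by (simp add: fK_def varX_def varY_def poly_const_pow X_pow_monom const_minus_1)

lemma bcoeff_fK:
  assumes "k \<ge> 1"
  shows "bcoeff (fK k) i j = (if (i, j) = (1, 0) \<or> (i, j) = (k, 1) then 1
     else if (i, j) = (0, 1) then -1 else 0)"
  using assms
  by (auto simp: bcoeff_def fK_explicit coeff_pCons coeff_monom split: nat.splits)

lemma bcoeff_fK_nz: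
  assumes "k \<ge> 1"
  shows "bcoeff (fK k) i j \<noteq> 0 \<longleftrightarrow> (i, j) \<in> {(1, 0), (k, 1), (0, 1)}"
  using assms by (auto simp: bcoeff_fK)

lemma tdeg_fK:
  assumes "k \<ge> 1"
  shows "tdeg (fK k) = k + 1"
proof -
  have S: "{i + j | i j. bcoeff (fK k) i j \<noteq> 0} = {1, k + 1}"
    using assms apply (auto simp: bcoeff_fK_nz)
     apply (rule exI[of _ 1], rule exI[of _ 0], simp)
    apply (rule exI[of _ k], rule exI[of _ 1], simp)
    done
  show ?thesis unfolding tdeg_def S by (rule Max_eqI) auto
qed

lemma tdeg_1: "tdeg 1 = 0"
proof -
  have S: "{i + j | i j. bcoeff 1 i j \<noteq> 0} = {0}"
    by (auto simp: bcoeff_def coeff_1 split: if_splits)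
  show ?thesis unfolding tdeg_def S by simp
qed

lemma double_sum_support:
  fixes g :: "nat \<Rightarrow> nat \<Rightarrow> 'a::comm_monoid_add"
  assumes "S \<subseteq> {..d} \<times> {..d}" "\<And>i j. (i, j) \<notin> S \<Longrightarrow> g i j = 0"
  shows "(\<Sum>i\<le>d. \<Sum>j\<le>d. g i j) = (\<Sum>(i, j)\<in>S. g i j)"
proof -
  have "(\<Sum>i\<le>d. \<Sum>j\<le>d. g i j) = (\<Sum>(i, j)\<in>{..d} \<times> {..d}. g i j)"
    by (rule sum.cartesian_product)
  also have "\<dots> = (\<Sum>(i, j)\<in>S. g i j)"
    using assms by (intro sum.mono_neutral_right) auto
  finally show ?thesis .
qed

lemma const3_1 [simp]: "const3 1 = 1" by (simp add: const3_def one_pCons)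
lemma const3_m1 [simp]: "const3 (-1) = -1" by (simp add: const3_def one_pCons)

lemma homog_fK:
  assumes "k \<ge> 1"
  shows "homog (k + 1) (fK k) = varX3 * varZ3 ^ k + varY3 * varX3 ^ k - varY3 * varZ3 ^ k"
proof -
  let ?g = "\<lambda>i j. if i + j \<le> k + 1
      then const3 (bcoeff (fK k) i j) * varX3 ^ i * varY3 ^ j * varZ3 ^ (k + 1 - i - j) else 0"
  have "homog (k + 1) (fK k) = (\<Sum>(i, j)\<in>{(1, 0), (k, 1), (0, 1)}. ?g i j)"
    unfolding homog_def
    by (rule double_sum_support) (use assms in \<open>auto simp: bcoeff_fK_nz const3_def\<close>)
  also have "\<dots> = varX3 * varZ3 ^ k + varY3 * varX3 ^ k - varY3 * varZ3 ^ k"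
    using assms by (simp add: bcoeff_fK algebra_simps)
  finally show ?thesis .
qed

lemma homog_1: "homog d 1 = varZ3 ^ d"
proof -
  let ?g = "\<lambda>i j. if i + j \<le> d
      then const3 (bcoeff 1 i j) * varX3 ^ i * varY3 ^ j * varZ3 ^ (d - i - j) else 0"
  have "homog d 1 = (\<Sum>(i, j)\<in>{(0, 0)}. ?g i j)"
    unfolding homog_def
    by (rule double_sum_support) (auto simp: bcoeff_def coeff_1 const3_def)
  also have "\<dots> = varZ3 ^ d"
    by (simp add: bcoeff_def)
  finally show ?thesis .
qed

lemma pencil_fK:
  assumes "k \<ge> 1"
  shows "pencil (fK k) 1 l m = const3 l * (varX3 * varZ3 ^ k + varY3 * varX3 ^ k - varY3 * varZ3 ^ k)
      - const3 m * varZ3 ^ (k + 1)"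
proof -
  have "max (tdeg (fK k)) (tdeg 1) = k + 1" using assms by (simp add: tdeg_fK tdeg_1)
  then show ?thesis unfolding pencil_def Let_def by (simp only: homog_fK[OF assms] homog_1)
qed


lemma coprime_key:
  fixes \<mu> :: complex
  assumes k: "k \<ge> 1" and mu: "\<mu> ^ k \<noteq> 1"
  defines "z \<equiv> [:0, 1:] :: complex poly"
  shows "coprime ([:0, 1:] ^ k - [:z ^ k:]) ([:z ^ k:] * [:- smult \<mu> z, 1:])"
proof (rule coprimeI)
  let ?a = "[:0, 1:] ^ k - [:z ^ k:] :: complex poly poly"
  let ?L = "[:- smult \<mu> z, 1:] :: complex poly poly"
  have ca: "coeff ?a k = 1" using k by (cases k) (simp_all add: X_pow_monom coeff_monom)
  then have a0: "?a \<noteq> 0" by auto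
  have "z \<noteq> 0" by (simp add: z_def)
  fix c assume c1: "c dvd ?a" and c2: "c dvd [:z ^ k:] * ?L"
  show "is_unit c"
  proof (rule ccontr)
    assume nu: "\<not> is_unit c"
    have "c \<noteq> 0" using c1 a0 by auto
    then obtain p where p: "p dvd c" "prime p" using nu prime_divisor_exists by blast
    have pa: "p dvd ?a" using p c1 dvd_trans by blast
    have pnu: "\<not> is_unit p" using p(2) by (simp add: prime_def prime_elem_def)
    have const_case: False if dp: "degree p = 0"
    proof -
      obtain e where "p = [:e:]" by (rule degree_eq_zeroE[OF dp])
      then have "e dvd coeff ?a k" using pa by (simp add: const_poly_dvd_iff)
      then have "is_unit e" using ca by simp
      then show False using pnu \<open>p = [:e:]\<close> by (simp add: is_unit_poly_iff)
    qed
    have "p dvd [:z ^ k:] \<or> p dvd ?L" using p(2) c2 dvd_trans p(1) prime_dvd_mult_iff by blast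
    then show False
    proof
      assume "p dvd [:z ^ k:]"
      then obtain e where "[:z ^ k:] = p * e" by (auto elim: dvdE)
      moreover have "z ^ k \<noteq> 0" using \<open>z \<noteq> 0\<close> by simp
      ultimately have "p \<noteq> 0" "e \<noteq> 0" by auto
      then have "degree [:z ^ k:] = degree p + degree e" using \<open>[:z ^ k:] = p * e\<close>
        by (simp add: degree_mult_eq)
      then have "degree p = 0" by simp
      then show False by (rule const_case)
    next
      assume "p dvd ?L"
      then obtain e where e: "?L = p * e" by (auto elim: dvdE)
      have "p \<noteq> 0" "e \<noteq> 0" using e by auto
      then have "degree (p * e) = degree p + degree e" by (rule degree_mult_eq)
      moreover have "degree ?L = 1" by simp
      ultimately have "degree p + degree e = 1" using e by simp
      moreover have "degree p \<noteq> 0" using const_case by blast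
      ultimately have "degree e = 0" by simp
      then obtain e0 where e0: "e = [:e0:]" by (rule degree_eq_zeroE)
      have "coeff ?L 1 = coeff p 1 * e0" unfolding e e0 by simp
      then have "1 = e0 * coeff p 1" by (simp add: mult.commute)
      then have "e0 dvd 1" by (rule dvdI)
      then obtain e1 where "1 = e0 * e1" by (auto elim: dvdE)
      have "?L * [:e1:] = p * ([:e0:] * [:e1:])" unfolding e e0 by (simp add: mult.assoc)
      also have "[:e0:] * [:e1:] = 1" using \<open>1 = e0 * e1\<close> by (simp add: one_pCons)
      finally have "p = ?L * [:e1:]" by simp
      then have "?L dvd ?a" using pa by (metis dvd_mult_left)
      then have "poly ?a (smult \<mu> z) = 0" by (simp only: poly_eq_0_iff_dvd)
      moreover have "poly ?a (smult \<mu> z) = smult (\<mu> ^ k - 1) (z ^ k)"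
        by (simp add: algebra_simps smult_power smult_diff_left)
      ultimately show False using mu \<open>z \<noteq> 0\<close> by simp
    qed
  qed
qed


lemma irr_pencil:
  fixes \<mu> :: complex
  assumes k: "k \<ge> 1" and mu: "\<mu> ^ k \<noteq> 1"
  shows "irreducible (pencil (fK k) 1 1 \<mu>)"
proof -
  define z :: "complex poly" where "z = [:0, 1:]"
  define a :: bpoly where "a = [:z:] ^ k - [:0, 1:] ^ k"
  define b :: bpoly where "b = [:z:] * [:0, 1:] ^ k - [:[:\<mu>:]:] * [:0, 1:] ^ (k + 1)"
  have sa: "swap a = [:0, 1:] ^ k - [:z ^ k:]"
    unfolding a_def z_def by (simp only: swap_diff swap_power swap_X swap_Y) (simp add: poly_const_pow)
  have sb: "swap b = [:z ^ k:] * [:- smult \<mu> z, 1:]"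
    unfolding b_def z_def by (simp only: swap_diff swap_power swap_mult swap_X swap_Y swap_const) (simp add: poly_const_pow)
  have "coprime (swap a) (swap b)" unfolding sa sb z_def using coprime_key[OF k mu] by simp
  then have cop: "coprime a b" by (rule coprime_swap)
  have "coeff a k = -1" unfolding a_def using k
    by (cases k) (simp_all add: poly_const_pow X_pow_monom coeff_monom)
  then have a0: "a \<noteq> 0" by auto
  have s1: "swap varX3 = varX3" "swap varY3 = [:0, 1:]" "swap varZ3 = [:[:0, 1:]:]"
      "swap (const3 c) = const3 c" for c
    unfolding varX3_def varY3_def varZ3_def const3_def by (simp_all only: swap_X swap_Y swap_const)
  have "swap (pencil (fK k) 1 1 \<mu>) = varX3 * [:[:0, 1:]:] ^ k + [:0, 1:] * varX3 ^ k
      - [:0, 1:] * [:[:0, 1:]:] ^ k - const3 \<mu> * [:[:0, 1:]:] ^ (k + 1)"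
    unfolding pencil_fK[OF k] const3_1 mult_1
    by (simp only: swap_diff swap_add swap_power swap_mult s1)
  also have "\<dots> = [:b, a:]"
    unfolding a_def b_def z_def varX3_def const3_def
    by (simp add: poly_const_pow)
  finally have "swap (pencil (fK k) 1 1 \<mu>) = [:b, a:]" .
  then have "irreducible (swap (pencil (fK k) 1 1 \<mu>))"
    using irreducible_linear_coprime[OF cop a0] by simp
  then show ?thesis by (rule irreducible_swap)
qed


lemma unit_degree0: "is_unit (p :: 'a::idom_divide poly) \<Longrightarrow> degree p = 0"
  by (auto simp: is_unit_poly_iff)

lemma const3_mult: "const3 a * const3 b = const3 (a * b)"
  by (simp add: const3_def)

lemma const3_power: "const3 a ^ n = const3 (a ^ n)"
  by (simp add: const3_def poly_const_pow)

lemma const3_unit: "a \<noteq> 0 \<Longrightarrow> is_unit (const3 a)"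
  by (simp add: const3_def is_unit_poly_iff dvd_field_iff)

lemma const3_eq_0 [simp]: "const3 a = 0 \<longleftrightarrow> a = 0"
  by (simp add: const3_def)

lemma degree_const3 [simp]: "degree (const3 a) = 0"
  by (simp add: const3_def)

lemma const3_0 [simp]: "const3 0 = 0"
  by (simp add: const3_def)

lemma pencil_scale:
  assumes k: "k \<ge> 1" and l: "l \<noteq> 0"
  shows "pencil (fK k) 1 l m = const3 l * pencil (fK k) 1 1 (m / l)"
  using l unfolding pencil_fK[OF k]
  by (simp add: algebra_simps const3_mult)

lemma coeff_pencil:
  assumes k: "k \<ge> 1"
  shows "coeff (pencil (fK k) 1 l m) (k + 1) = - [:[:m:]:]"
    and "coeff (pencil (fK k) 1 l m) 0 = [:[:l:]:] * [:0, [:0, 1:] ^ k:]"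
  using k unfolding pencil_fK[OF k]
  by (simp_all add: varX3_def varY3_def varZ3_def const3_def X_pow_monom coeff_monom poly_const_pow
     flip: monom_altdef)


lemma reducible_root:
  assumes k: "k \<ge> 1" and om: "\<omega> ^ k = 1"
  shows "\<not> irreducible (pencil (fK k) 1 1 \<omega>)"
proof
  assume irr: "irreducible (pencil (fK k) 1 1 \<omega>)"
  have om0: "\<omega> \<noteq> 0" using om k by (cases k) auto
  define L where "L = varX3 - const3 \<omega> * varZ3"
  define S where "S = (\<Sum>i<k. (const3 \<omega> * varZ3) ^ (k - Suc i) * varX3 ^ i)"
  define M where "M = varY3 * S + varZ3 ^ k"
  have LS: "L * S = varX3 ^ k - varZ3 ^ k"
  proof -
    have "L * S = varX3 ^ k - (const3 \<omega> * varZ3) ^ k"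
      unfolding L_def S_def by (rule power_diff_sumr2[symmetric])
    also have "(const3 \<omega> * varZ3) ^ k = varZ3 ^ k"
      unfolding power_mult_distrib const3_power om by simp
    finally show ?thesis .
  qed
  have eq: "pencil (fK k) 1 1 \<omega> = L * M"
  proof -
    have "L * M = varY3 * (L * S) + L * varZ3 ^ k" unfolding M_def by (simp add: distrib_left mult.left_commute)
    also have "\<dots> = varY3 * (varX3 ^ k - varZ3 ^ k) + (varX3 - const3 \<omega> * varZ3) * varZ3 ^ k"
      unfolding LS by (simp only: L_def)
    also have "\<dots> = pencil (fK k) 1 1 \<omega>"
      unfolding pencil_fK[OF k] by (simp add: algebra_simps)
    finally show ?thesis by simp
  qed
  have dL: "degree L = 1"
    unfolding L_def using om0 by (simp add: varX3_def varZ3_def const3_def)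
  have "is_unit L \<or> is_unit M" by (rule irreducibleD[OF irr eq])
  moreover have "\<not> is_unit L" using dL unit_degree0 by (metis one_neq_zero)
  ultimately have uM: "is_unit M" by blast
  then have "degree M = 0" by (rule unit_degree0)
  moreover have "L \<noteq> 0" "M \<noteq> 0" using dL uM by auto
  ultimately have "degree (L * M) = 1"
    using dL by (simp add: degree_mult_eq)
  then have d1: "degree (pencil (fK k) 1 1 \<omega>) = 1" using eq by simp
  have "coeff (pencil (fK k) 1 1 \<omega>) (k + 1) \<noteq> 0"
    using coeff_pencil(1)[OF k] om0 by simp
  then have "degree (pencil (fK k) 1 1 \<omega>) \<ge> k + 1" by (rule le_degree)
  with d1 k show False by simp
qed

lemma reducible_inf:
  assumes k: "k \<ge> 1" and m: "m \<noteq> 0"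
  shows "\<not> irreducible (pencil (fK k) 1 0 m)"
proof
  assume irr: "irreducible (pencil (fK k) 1 0 m)"
  have eq: "pencil (fK k) 1 0 m = (- const3 m * varZ3) * varZ3 ^ k"
    unfolding pencil_fK[OF k] by (simp add: mult.assoc)
  have "is_unit (- const3 m * varZ3) \<or> is_unit (varZ3 ^ k)" by (rule irreducibleD[OF irr eq])
  moreover have d1: "degree (- const3 m * varZ3) = 1" using m by (simp add: const3_def varZ3_def)
  moreover have d2: "degree (varZ3 ^ k :: tpoly) = k" by (simp add: varZ3_def degree_power_eq)
  ultimately show False using k unit_degree0 by (metis one_neq_zero not_one_le_zero)
qed


lemma proj_pt_scale: "l \<noteq> 0 \<Longrightarrow> proj_pt l m = proj_pt 1 (m / l)"
  unfolding proj_pt_def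
proof (intro set_eqI iffI)
  fix x :: "complex \<times> complex" assume l: "l \<noteq> 0" and "x \<in> {(c * l, c * m) |c. c \<noteq> 0}"
  then obtain c where "x = (c * l, c * m)" "c \<noteq> 0" by auto
  then show "x \<in> {(c * 1, c * (m / l)) |c. c \<noteq> 0}" using l
    by (intro CollectI exI[of _ "c * l"]) auto
next
  fix x :: "complex \<times> complex" assume l: "l \<noteq> 0" and "x \<in> {(c * 1, c * (m / l)) |c. c \<noteq> 0}"
  then obtain c where "x = (c, c * (m / l))" "c \<noteq> 0" by auto
  then show "x \<in> {(c * l, c * m) |c. c \<noteq> 0}" using l
    by (intro CollectI exI[of _ "c / l"]) auto
qed

lemma proj_pt_inf: "m \<noteq> 0 \<Longrightarrow> proj_pt 0 m = proj_pt 0 1"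
  unfolding proj_pt_def
proof (intro set_eqI iffI)
  fix x :: "complex \<times> complex" assume m: "m \<noteq> 0" and "x \<in> {(c * 0, c * m) |c. c \<noteq> 0}"
  then obtain c where "x = (0, c * m)" "c \<noteq> 0" by auto
  then show "x \<in> {(c * 0, c * 1) |c. c \<noteq> 0}" using m
    by (intro CollectI exI[of _ "c * m"]) auto
next
  fix x :: "complex \<times> complex" assume m: "m \<noteq> 0" and "x \<in> {(c * 0, c * 1) |c. c \<noteq> 0}"
  then obtain c :: complex where "x = (c * 0, c * 1)" "c \<noteq> 0" by blast
  then show "x \<in> {(c * 0, c * m) |c. c \<noteq> 0}" using m
    by (intro CollectI exI[of _ "c / m"]) auto
qed

lemma proj_pt_mem: "(1, a) \<in> proj_pt 1 a"
  unfolding proj_pt_def by (intro CollectI exI[of _ 1]) auto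

lemma proj_pt_inj: "proj_pt 1 a = proj_pt 1 b \<Longrightarrow> a = b"
proof -
  assume "proj_pt 1 a = proj_pt 1 b"
  then have "(1, a) \<in> proj_pt 1 b" using proj_pt_mem by metis
  then show "a = b" unfolding proj_pt_def by auto
qed

lemma proj_pt_ne: "proj_pt 1 a \<noteq> proj_pt 0 1"
proof
  assume "proj_pt 1 a = proj_pt 0 1"
  then have "(1, a) \<in> proj_pt 0 1" using proj_pt_mem by metis
  then show False unfolding proj_pt_def by auto
qed


lemma sigma_eq:
  assumes k: "k \<ge> 1"
  shows "spectrum_sigma (fK k) 1 = {proj_pt 1 \<omega> | \<omega>. \<omega> ^ k = 1} \<union> {proj_pt 0 1}"
proof (intro set_eqI iffI)
  fix x assume "x \<in> spectrum_sigma (fK k) 1"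
  then obtain l m where x: "x = proj_pt l m" "(l, m) \<noteq> (0, 0)" "\<not> irreducible (pencil (fK k) 1 l m)"
    unfolding spectrum_sigma_def by blast
  show "x \<in> {proj_pt 1 \<omega> | \<omega>. \<omega> ^ k = 1} \<union> {proj_pt 0 1}"
  proof (cases "l = 0")
    case True
    then have "m \<noteq> 0" using x by simp
    then have "x = proj_pt 0 1" using x(1) True proj_pt_inf[of m] by metis
    then show ?thesis by simp
  next
    case False
    have "\<not> irreducible (pencil (fK k) 1 1 (m / l))"
      using x(3) unfolding pencil_scale[OF k False] irreducible_mult_unit_left[OF const3_unit[OF False]] .
    then have "(m / l) ^ k = 1" using irr_pencil[OF k] by blast
    moreover have "x = proj_pt 1 (m / l)" using x(1) proj_pt_scale[OF False, of m] by metis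
    ultimately show ?thesis by blast
  qed
next
  fix x assume "x \<in> {proj_pt 1 \<omega> | \<omega>. \<omega> ^ k = 1} \<union> {proj_pt 0 1}"
  then show "x \<in> spectrum_sigma (fK k) 1"
  proof
    assume "x \<in> {proj_pt 1 \<omega> | \<omega>. \<omega> ^ k = 1}"
    then obtain \<omega> where om: "x = proj_pt 1 \<omega>" "\<omega> ^ k = 1" by blast
    have "\<not> irreducible (pencil (fK k) 1 1 \<omega>)" by (rule reducible_root[OF k om(2)])
    then show ?thesis unfolding spectrum_sigma_def om(1)
      by (intro CollectI exI[of _ 1] exI[of _ \<omega>]) simp
  next
    assume "x \<in> {proj_pt 0 1}"
    then have x: "x = proj_pt 0 1" by simp
    have "\<not> irreducible (pencil (fK k) 1 0 1)" by (rule reducible_inf[OF k]) simp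
    then show ?thesis unfolding spectrum_sigma_def x
      by (intro CollectI exI[of _ 0] exI[of _ 1]) simp
  qed
qed


lemma card_points:
  assumes k: "k \<ge> 1"
  shows "finite ({proj_pt 1 \<omega> | \<omega>. \<omega> ^ k = 1} \<union> {proj_pt 0 1})"
    and "card ({proj_pt 1 \<omega> | \<omega>. \<omega> ^ k = (1::complex)} \<union> {proj_pt 0 1}) = k + 1"
proof -
  have eq: "{proj_pt 1 \<omega> | \<omega>. \<omega> ^ k = 1} = proj_pt 1 ` {\<omega>::complex. \<omega> ^ k = 1}" by blast
  have inj: "inj_on (proj_pt 1) {\<omega>::complex. \<omega> ^ k = 1}" by (rule inj_onI) (rule proj_pt_inj)
  have c: "card {\<omega>::complex. \<omega> ^ k = 1} = k" using k by (rule card_complex_roots_unity)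
  have fin: "finite {\<omega>::complex. \<omega> ^ k = 1}" using c k by (intro card_ge_0_finite) auto
  show "finite ({proj_pt 1 \<omega> | \<omega>. \<omega> ^ k = 1} \<union> {proj_pt 0 1})" unfolding eq using fin by simp
  have "proj_pt 0 1 \<notin> proj_pt 1 ` {\<omega>::complex. \<omega> ^ k = 1}"
  proof
    assume "proj_pt 0 1 \<in> proj_pt 1 ` {\<omega>::complex. \<omega> ^ k = 1}"
    then obtain \<omega> where "proj_pt 0 1 = proj_pt 1 \<omega>" by blast
    then show False using proj_pt_ne[of \<omega>] by simp
  qed
  then show "card ({proj_pt 1 \<omega> | \<omega>. \<omega> ^ k = (1::complex)} \<union> {proj_pt 0 1}) = k + 1"
    unfolding eq using fin inj c by (simp add: card_image)
qed


lemma gamma_eq: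
  assumes k: "k \<ge> 1"
  shows "spectrum_gamma (fK k) 1 = {proj_pt 0 1}"
proof (intro set_eqI iffI)
  fix x assume "x \<in> spectrum_gamma (fK k) 1"
  then obtain l m P e where x: "x = proj_pt l m" "(l, m) \<noteq> (0, 0)" "e > 1"
      "pencil (fK k) 1 l m = P ^ e"
    unfolding spectrum_gamma_def by blast
  show "x \<in> {proj_pt 0 1}"
  proof (cases "l = 0")
    case True
    then have "m \<noteq> 0" using x by simp
    then have "x = proj_pt 0 1" using x(1) True proj_pt_inf[of m] by metis
    then show ?thesis by simp
  next
    case False
    have "coeff (P ^ e) 0 = coeff P 0 ^ e" by (rule coeff_0_power)
    then have eq: "[:[:l:]:] * [:0, [:0, 1:] ^ k:] = coeff P 0 ^ e"
      using x(4) coeff_pencil(2)[OF k, of l m] by simp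
    have d1: "degree ([:[:l:]:] * [:0, [:0, 1:] ^ k:] :: bpoly) = 1" using False by simp
    have nz: "[:[:l:]:] * [:0, [:0, 1:] ^ k:] \<noteq> (0 :: bpoly)" using False by simp
    have "coeff P 0 \<noteq> 0"
    proof
      assume "coeff P 0 = 0"
      then have "coeff P 0 ^ e = 0" using x(3) by simp
      with eq nz show False by simp
    qed
    then have "degree (coeff P 0 ^ e) = e * degree (coeff P 0)" by (rule degree_power_eq)
    then have "e * degree (coeff P 0) = 1" using eq d1 by simp
    then show ?thesis using x(3) by simp
  qed
next
  fix x assume "x \<in> {proj_pt 0 1}"
  then have x: "x = proj_pt 0 1" by simp
  obtain c :: complex where c: "c ^ (k + 1) = - 1" using nth_root_exists[of "k + 1" "-1"] by auto
  have "pencil (fK k) 1 0 1 = (const3 c * varZ3) ^ (k + 1)"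
    unfolding pencil_fK[OF k] power_mult_distrib const3_power c by simp
  then show "x \<in> spectrum_gamma (fK k) 1" unfolding spectrum_gamma_def x using k
    by (intro CollectI exI[of _ 0] exI[of _ 1]) (auto intro!: exI[of _ "k + 1"])
qed




definition AK :: "nat \<Rightarrow> bpoly" where "AK k = varX ^ k - 1"
definition BK :: "nat \<Rightarrow> bpoly" where "BK k = - (constB (of_nat k) * varX ^ (k - 1) * varY + 1)"

lemma AK_explicit: "AK k = [:monom 1 k - 1:]"
  by (simp add: AK_def varX_def poly_const_pow X_pow_monom const_minus_1)

lemma BK_explicit: "BK k = [:-1, - smult (of_nat k) (monom 1 (k - 1)):]"
  by (simp add: BK_def varX_def varY_def constB_def poly_const_pow X_pow_monom one_pCons smult_monom)

lemma pderiv_one': "pderiv (1 :: 'a::{comm_semiring_1,semiring_no_zero_divisors} poly) = 0"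
  by (simp add: pderiv_pCons one_pCons[symmetric])

lemma first_integral:
  assumes k: "k \<ge> 1"
  shows "poly_first_integral (AK k) (BK k) (fK k)"
proof -
  have dXf: "dX (fK k) = [:1, smult (of_nat k) (monom 1 (k - 1)):]"
    unfolding dX_def fK_explicit by (simp add: map_poly_pCons pderiv_monom pderiv_pCons pderiv_diff pderiv_one' smult_monom)
  have dYf: "dY (fK k) = [:monom 1 k - 1:]"
    unfolding dY_def fK_explicit by (simp add: pderiv_pCons)
  show ?thesis unfolding poly_first_integral_def derivD_def dXf dYf AK_explicit BK_explicit
    by (simp add: algebra_simps)
qed


lemma icoeff_AK:
  assumes k: "k \<ge> 1"
  shows "icoeff (AK k) (a + 1) b = (if b = 0 \<and> a + 1 = int k then 1 else 0) - (if b = 0 \<and> a + 1 = 0 then 1 else 0)"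
  using k unfolding icoeff_def bcoeff_def AK_explicit
  by (auto simp: coeff_monom coeff_1 coeff_pCons nat_eq_iff split: nat.splits)

lemma icoeff_BK:
  assumes k: "k \<ge> 1"
  shows "icoeff (BK k) a (b + 1) = (if b = -1 \<and> a = 0 then -1 else 0) + (if b = 0 \<and> a = int k - 1 then - of_nat k else 0)"
  using k unfolding icoeff_def bcoeff_def BK_explicit
  by (auto simp: coeff_monom coeff_pCons nat_eq_iff split: nat.splits)

lemma support_AK_BK:
  assumes k: "k \<ge> 1" and x: "x \<noteq> 0" and y: "y \<noteq> 0" and xy: "x \<noteq> of_nat k * y"
  shows "laurent_support (AK k) (BK k) x y = {(-1, 0), (int k - 1, 0), (0, -1)}"
  unfolding laurent_support_def icoeff_AK[OF k] icoeff_BK[OF k]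
  using k x y xy by (auto simp: algebra_simps)


lemma hull_points:
  assumes k: "k \<ge> 1"
  shows "{p :: nat \<times> nat. (real (fst p), real (snd p)) \<in> convex hull {(-1, 0), (real k - 1, 0), (0, -1)}}
     = (\<lambda>i. (i, 0)) ` {..<k}"
proof (intro set_eqI iffI)
  let ?H = "convex hull {(-1, 0), (real k - 1, 0), (0 :: real, -1 :: real)}"
  let ?C = "{p :: real \<times> real. (0, 1) \<bullet> p \<le> 0} \<inter> {p. (1, 0) \<bullet> p \<le> real k - 1}"
  fix p :: "nat \<times> nat"
  assume "p \<in> {p. (real (fst p), real (snd p)) \<in> ?H}"
  then have pH: "(real (fst p), real (snd p)) \<in> ?H" by simp
  have "?H \<subseteq> ?C"
    by (rule hull_minimal) (use k in \<open>auto intro!: convex_Int convex_halfspace_le simp: inner_Pair\<close>)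
  then have "(real (fst p), real (snd p)) \<in> ?C" using pH by blast
  then have "real (snd p) \<le> 0" "real (fst p) \<le> real k - 1" by (auto simp: inner_Pair)
  then have "snd p = 0" "fst p < k" using k by linarith+
  then show "p \<in> (\<lambda>i. (i, 0)) ` {..<k}" by (intro image_eqI[of _ _ "fst p"]) (auto simp: prod_eq_iff)
next
  let ?H = "convex hull {(-1, 0), (real k - 1, 0), (0 :: real, -1 :: real)}"
  fix p :: "nat \<times> nat"
  assume "p \<in> (\<lambda>i. (i, 0)) ` {..<k}"
  then obtain i where p: "p = (i, 0)" "i < k" by auto
  define u where "u = (real i + 1) / real k"
  have u: "0 \<le> u" "u \<le> 1" using p(2) by (auto simp: u_def field_simps)
  have "(1 - u) *\<^sub>R (-1, 0) + u *\<^sub>R (real k - 1, 0) \<in> ?H"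
    by (rule convexD_alt[OF convex_convex_hull]) (use u in \<open>auto intro: hull_inc\<close>)
  moreover have "(1 - u) *\<^sub>R (-1, 0) + u *\<^sub>R (real k - 1, 0) = (real i, 0 :: real)"
    using k by (simp add: u_def field_simps)
  ultimately show "p \<in> {p. (real (fst p), real (snd p)) \<in> ?H}" using p by simp
qed

lemma lattice_count_k:
  assumes k: "k \<ge> 1" and x: "x \<noteq> 0" and y: "y \<noteq> 0" and xy: "x \<noteq> of_nat k * y"
  shows "lattice_count (AK k) (BK k) x y = k"
proof -
  have "newton_polygon (AK k) (BK k) x y = convex hull {(-1, 0), (real k - 1, 0), (0, -1)}"
    unfolding newton_polygon_def support_AK_BK[OF k x y xy] using k by (simp add: of_nat_diff)
  then show ?thesis unfolding lattice_count_def using hull_points[OF k]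
    by (simp add: card_image inj_on_def)
qed


lemma bpoly_nonroot:
  fixes Q :: bpoly
  assumes "Q \<noteq> 0"
  shows "\<exists>x y. poly (poly Q [:y:]) x \<noteq> 0"
proof -
  have "finite {c. poly Q c = 0}" using assms by (rule poly_roots_finite)
  then have "finite ((\<lambda>y. [:y:]) -` {c. poly Q c = 0})"
    by (rule finite_vimageI) (auto simp: inj_on_def)
  then have "(\<lambda>y. [:y:]) -` {c. poly Q c = 0} \<noteq> (UNIV :: complex set)"
    using infinite_UNIV_char_0 by auto
  then obtain y where y: "poly Q [:y:] \<noteq> 0" by auto
  have "finite {x. poly (poly Q [:y:]) x = 0}" using y by (rule poly_roots_finite)
  then have "{x. poly (poly Q [:y:]) x = 0} \<noteq> (UNIV :: complex set)"
    using infinite_UNIV_char_0 by auto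
  then obtain x where "poly (poly Q [:y:]) x \<noteq> 0" by auto
  then show ?thesis by blast
qed

lemma calB_k:
  assumes k: "k \<ge> 1"
  shows "calB (AK k) (BK k) = k"
  unfolding calB_def
proof (rule the_equality)
  define q where "q = varX * varY * (varX - constB (of_nat k) * varY)"
  have ev: "poly (poly q [:y:]) x = x * y * (x - of_nat k * y)" for x y
    unfolding q_def by (simp add: varX_def varY_def constB_def poly_mult algebra_simps)
  have "(of_nat k + 1 :: complex) = of_nat (Suc k)" by simp
  then have "(of_nat k + 1 :: complex) \<noteq> 0" by (metis of_nat_eq_0_iff nat.distinct(1))
  then have "poly (poly q [:1:]) (of_nat k + 1) \<noteq> 0" unfolding ev by simp
  then have q0: "q \<noteq> 0" by auto
  show "generic (\<lambda>x y. lattice_count (AK k) (BK k) x y = k)"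
    unfolding generic_def
  proof (intro exI[of _ q] conjI allI impI)
    show "q \<noteq> 0" by (rule q0)
    fix x y assume "poly (poly q [:y:]) x \<noteq> 0"
    then have "x \<noteq> 0" "y \<noteq> 0" "x \<noteq> of_nat k * y" unfolding ev by auto
    then show "lattice_count (AK k) (BK k) x y = k" by (rule lattice_count_k[OF k])
  qed
  fix n assume "generic (\<lambda>x y. lattice_count (AK k) (BK k) x y = n)"
  then obtain q' where q': "q' \<noteq> 0" "\<And>x y. poly (poly q' [:y:]) x \<noteq> 0 \<Longrightarrow> lattice_count (AK k) (BK k) x y = n"
    unfolding generic_def by blast
  obtain x y where "poly (poly (q * q') [:y:]) x \<noteq> 0" using bpoly_nonroot[of "q * q'"] q0 q'(1) by auto
  then have h: "poly (poly q [:y:]) x \<noteq> 0" "poly (poly q' [:y:]) x \<noteq> 0" by (auto simp: poly_mult)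
  then have "x \<noteq> 0" "y \<noteq> 0" "x \<noteq> of_nat k * y" unfolding ev by auto
  then have "lattice_count (AK k) (BK k) x y = k" by (rule lattice_count_k[OF k])
  then show "n = k" using q'(2)[OF h(2)] by simp
qed


lemma ratfun_add: "ratfun (a + b) = ratfun a + ratfun b"
  by (simp add: ratfun_def add_fract)
lemma ratfun_mult: "ratfun (a * b) = ratfun a * ratfun b"
  by (simp add: ratfun_def)
lemma ratfun_0 [simp]: "ratfun 0 = 0"
  by (simp add: ratfun_def Zero_fract_def)
lemma ratfun_1 [simp]: "ratfun 1 = 1"
  by (simp add: ratfun_def One_fract_def)
lemma ratfun_diff: "ratfun (a - b) = ratfun a - ratfun b"
  by (simp add: ratfun_def)
lemma ratfun_power: "ratfun (a ^ n) = ratfun a ^ n"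
  by (induction n) (simp_all add: ratfun_mult)
lemma ratfun_sum: "ratfun (sum g A) = (\<Sum>i\<in>A. ratfun (g i))"
  by (induction A rule: infinite_finite_induct) (simp_all add: ratfun_add)
lemma ratfun_inj: "ratfun a = ratfun b \<longleftrightarrow> a = b"
  by (simp add: ratfun_def eq_fract)
lemma ratfun_eq_0 [simp]: "ratfun a = 0 \<longleftrightarrow> a = 0"
  using ratfun_inj[of a 0] by simp
lemma Fract_ratfun: "b \<noteq> 0 \<Longrightarrow> Fraction_Field.Fract a b = ratfun a / ratfun b"
  by (simp add: ratfun_def)

lemma constB_add: "constB (a + b) = constB a + constB b" by (simp add: constB_def)
lemma constB_mult: "constB (a * b) = constB a * constB b" by (simp add: constB_def)
lemma constB_0 [simp]: "constB 0 = 0" by (simp add: constB_def)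
lemma constB_1 [simp]: "constB 1 = 1" by (simp add: constB_def one_pCons)
lemma constB_eq_0 [simp]: "constB a = 0 \<longleftrightarrow> a = 0" by (simp add: constB_def)
lemma constB_power: "constB (a ^ n) = constB a ^ n" by (simp add: constB_def poly_const_pow)
lemma constB_sum: "constB (sum g A) = (\<Sum>i\<in>A. constB (g i))"
  by (induction A rule: infinite_finite_induct) (simp_all add: constB_add)
lemma constB_unit: "a \<noteq> 0 \<Longrightarrow> is_unit (constB a)"
  by (simp add: constB_def is_unit_poly_iff dvd_field_iff)

definition phi :: "complex \<Rightarrow> bpoly fract" where "phi c = ratfun (constB c)"

lemma eval_at_poly: "eval_at p h = poly (map_poly phi p) h"
proof -
  have d: "degree (map_poly phi p) = degree p"
    by (rule degree_map_poly) (simp add: phi_def)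
  show ?thesis unfolding eval_at_def poly_altdef d
    by (intro sum.cong) (simp_all add: coeff_map_poly phi_def)
qed

lemma eval_at_mult: "eval_at (p * q) h = eval_at p h * eval_at q h"
proof -
  have "map_poly phi (p * q) = map_poly phi p * map_poly phi q"
    by (rule map_poly_mult_hom) (simp_all add: phi_def constB_add constB_mult ratfun_add ratfun_mult)
  then show ?thesis by (simp add: eval_at_poly poly_mult)
qed

definition H :: "nat \<Rightarrow> complex poly \<Rightarrow> bpoly \<Rightarrow> bpoly \<Rightarrow> bpoly" where
  "H d p a b = (\<Sum>i\<le>d. constB (coeff p i) * a ^ i * b ^ (d - i))"

lemma ratfun_H:
  assumes b: "b \<noteq> 0" and d: "degree p \<le> d"
  shows "ratfun (H d p a b) = ratfun b ^ d * eval_at p (Fraction_Field.Fract a b)"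
proof -
  let ?h = "Fraction_Field.Fract a b"
  have rb: "ratfun b \<noteq> 0" using b by simp
  have "eval_at p ?h = (\<Sum>i\<le>d. phi (coeff p i) * ?h ^ i)"
    unfolding eval_at_def phi_def
    by (rule sum.mono_neutral_left) (use d in \<open>auto simp: coeff_eq_0\<close>)
  then have "ratfun b ^ d * eval_at p ?h = (\<Sum>i\<le>d. phi (coeff p i) * (ratfun b ^ d * ?h ^ i))"
    by (simp add: sum_distrib_left algebra_simps)
  also have "\<dots> = (\<Sum>i\<le>d. phi (coeff p i) * ratfun a ^ i * ratfun b ^ (d - i))"
  proof (intro sum.cong refl)
    fix i assume "i \<in> {..d}"
    then have "ratfun b ^ d = ratfun b ^ i * ratfun b ^ (d - i)" by (simp add: power_add[symmetric])
    then show "phi (coeff p i) * (ratfun b ^ d * ?h ^ i) = phi (coeff p i) * ratfun a ^ i * ratfun b ^ (d - i)"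
      using rb b by (simp add: Fract_ratfun power_divide)
  qed
  also have "\<dots> = ratfun (H d p a b)"
    unfolding H_def ratfun_sum by (simp add: ratfun_mult ratfun_power phi_def)
  finally show ?thesis by simp
qed

lemma H_mult:
  assumes b: "b \<noteq> 0" and "degree p1 \<le> d1" "degree p2 \<le> d2"
  shows "H (d1 + d2) (p1 * p2) a b = H d1 p1 a b * H d2 p2 a b"
proof -
  have "degree (p1 * p2) \<le> d1 + d2" using assms degree_mult_le[of p1 p2] by linarith
  then have "ratfun (H (d1 + d2) (p1 * p2) a b) = ratfun (H d1 p1 a b * H d2 p2 a b)"
    using assms by (simp add: ratfun_H ratfun_mult eval_at_mult power_add algebra_simps)
  then show ?thesis by (simp add: ratfun_inj)
qed

lemma H_shift:
  assumes b: "b \<noteq> 0" and "degree p \<le> d"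
  shows "H (d + m) p a b = b ^ m * H d p a b"
proof -
  have "ratfun (H (d + m) p a b) = ratfun (b ^ m * H d p a b)"
    using assms by (simp add: ratfun_H ratfun_mult ratfun_power power_add algebra_simps)
  then show ?thesis by (simp add: ratfun_inj)
qed

lemma constB_uminus: "constB (- a) = - constB a" by (simp add: constB_def)

lemma H_linear: "H 1 [:- \<beta>, 1:] a b = a - constB \<beta> * b"
  by (simp add: H_def constB_uminus)

lemma H_const: "H 0 [:c:] a b = constB c"
  by (simp add: H_def)


lemma prime_dvd_H:
  assumes b: "b \<noteq> 0" and pr: "prime \<pi>"
  shows "q \<noteq> 0 \<Longrightarrow> \<pi> dvd H (degree q) q a b \<Longrightarrow> \<exists>\<beta>. poly q \<beta> = 0 \<and> \<pi> dvd a - constB \<beta> * b"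
proof (induction "degree q" arbitrary: q)
  case 0
  then obtain c where c: "q = [:c:]" by (metis degree_eq_zeroE)
  then have "c \<noteq> 0" using 0 by simp
  then have "is_unit (H (degree q) q a b)" using c H_const[of c a b] constB_unit by simp
  then have "is_unit \<pi>" using 0 dvd_unit_imp_unit by blast
  then show ?case using pr by (simp add: prime_def prime_elem_def)
next
  case (Suc n)
  then have "\<not> constant (poly q)" by (simp add: constant_degree)
  then obtain \<beta> where \<beta>: "poly q \<beta> = 0" using fundamental_theorem_of_algebra by blast
  then obtain q' where q': "q = [:- \<beta>, 1:] * q'" by (auto simp: poly_eq_0_iff_dvd elim: dvdE)
  have "q' \<noteq> 0" using Suc.prems q' by auto
  then have "degree q = degree [:- \<beta>, 1:] + degree q'" unfolding q' by (intro degree_mult_eq) simp_all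
  then have dq': "degree q = 1 + degree q'" by simp
  have F: "H (1 + degree q') ([:- \<beta>, 1:] * q') a b = H 1 [:- \<beta>, 1:] a b * H (degree q') q' a b"
    by (rule H_mult[OF b]) simp_all
  have Hq: "H (degree q) q a b = H 1 [:- \<beta>, 1:] a b * H (degree q') q' a b"
    by (metis F dq' q')
  have "\<pi> dvd (a - constB \<beta> * b) * H (degree q') q' a b"
    using Suc.prems(2) unfolding Hq H_linear .
  then have "\<pi> dvd a - constB \<beta> * b \<or> \<pi> dvd H (degree q') q' a b"
    using pr prime_dvd_mult_iff by blast
  then show ?case
  proof
    assume "\<pi> dvd a - constB \<beta> * b" then show ?case using \<beta> by blast
  next
    assume h: "\<pi> dvd H (degree q') q' a b"
    have "n = degree q'" using Suc.hyps(2) dq' by simp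
    then obtain \<beta>' where "poly q' \<beta>' = 0" "\<pi> dvd a - constB \<beta>' * b"
      using Suc.hyps(1)[of q'] \<open>q' \<noteq> 0\<close> h by blast
    then show ?case using q' by (intro exI[of _ \<beta>']) simp
  qed
qed

definition comp :: "complex poly \<Rightarrow> bpoly \<Rightarrow> bpoly" where
  "comp R g = poly (map_poly constB R) g"

lemma comp_pcompose: "comp R g = pcompose (map_poly (\<lambda>c. [:c:]) R) g"
  unfolding comp_def pcompose_altdef constB_def[abs_def]
  by (simp add: map_poly_map_poly o_def)

lemma degree_comp: "degree (comp R g) = degree R * degree g"
  unfolding comp_pcompose degree_pcompose by (simp add: degree_map_poly)

lemma comp_add: "comp (R + S) g = comp R g + comp S g"
  unfolding comp_def by (simp add: map_poly_add_hom constB_add poly_add)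

lemma comp_mult: "comp (R * S) g = comp R g * comp S g"
  unfolding comp_def by (simp add: map_poly_mult_hom constB_add constB_mult poly_mult)

lemma comp_0 [simp]: "comp 0 g = 0" by (simp add: comp_def)
lemma comp_1 [simp]: "comp 1 g = 1" by (simp add: comp_def)

lemma comp_sum: "comp (sum F A) g = (\<Sum>i\<in>A. comp (F i) g)"
  by (induction A rule: infinite_finite_induct) (simp_all add: comp_add)

lemma comp_power: "comp (R ^ n) g = comp R g ^ n"
  by (induction n) (simp_all add: comp_mult)

lemma comp_monom: "comp (monom c n) g = constB c * g ^ n"
  unfolding comp_def by (simp add: map_poly_monom poly_monom)

lemma comp_linear: "comp [:e, \<beta>:] g = constB e + constB \<beta> * g"
  unfolding comp_def by (simp add: map_poly_pCons)

lemma comp_smult: "comp (smult c R) g = constB c * comp R g"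
  unfolding comp_def by (simp add: map_poly_smult constB_mult poly_smult constB_def)

lemma degree_linear_power: "degree ([:e, \<beta>:] ^ i) \<le> i"
proof -
  have "degree ([:e, \<beta>:] ^ i) \<le> degree [:e, \<beta>:] * i" by (rule degree_power_le)
  also have "\<dots> \<le> 1 * i" by (rule mult_le_mono1) simp
  finally show ?thesis by simp
qed

lemma coeff_linear_power: "coeff ([:e, \<beta>:] ^ i) i = \<beta> ^ i"
proof (induction i)
  case 0 then show ?case by simp
next
  case (Suc i)
  let ?p = "[:e, \<beta>:] ^ i"
  have z: "coeff ?p (Suc i) = 0" using degree_linear_power[of e \<beta> i] by (intro coeff_eq_0) simp
  have "[:e, \<beta>:] ^ Suc i = smult e ?p + pCons 0 (smult \<beta> ?p)"
    by (simp only: power_Suc mult_pCons_left smult_pCons smult_0_right mult_zero_left pCons_0_0 add_0_right)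
  then have "coeff ([:e, \<beta>:] ^ Suc i) (Suc i) = e * coeff ?p (Suc i) + \<beta> * coeff ?p i"
    by simp
  then show ?case using z Suc.IH by simp
qed


lemma b_dvd_H:
  shows "b dvd H (Suc m) p a b - constB (coeff p (Suc m)) * a ^ Suc m"
proof -
  have "H (Suc m) p a b - constB (coeff p (Suc m)) * a ^ Suc m
      = (\<Sum>i\<le>m. constB (coeff p i) * a ^ i * b ^ (Suc m - i))"
    unfolding H_def by (simp add: sum.atMost_Suc)
  also have "b dvd \<dots>"
  proof (rule dvd_sum)
    fix i assume "i \<in> {..m}"
    then have "b ^ (Suc m - i) = b * b ^ (m - i)" by (simp add: Suc_diff_le)
    then show "b dvd constB (coeff p i) * a ^ i * b ^ (Suc m - i)" by simp
  qed
  finally show ?thesis .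
qed

lemma lin_dvd_H:
  assumes "degree p \<le> n"
  shows "(a - constB \<beta> * b) dvd H n p a b - constB (poly p \<beta>) * b ^ n"
proof -
  let ?c = "constB \<beta> * b"
  have pb: "poly p \<beta> = (\<Sum>i\<le>n. coeff p i * \<beta> ^ i)"
    unfolding poly_altdef
    by (rule sum.mono_neutral_left) (use assms in \<open>auto simp: coeff_eq_0\<close>)
  have "constB (poly p \<beta>) * b ^ n = (\<Sum>i\<le>n. constB (coeff p i) * ?c ^ i * b ^ (n - i))"
    unfolding pb constB_sum sum_distrib_right
  proof (intro sum.cong refl)
    fix i assume "i \<in> {..n}"
    then have "b ^ n = b ^ i * b ^ (n - i)" by (simp add: power_add[symmetric])
    then show "constB (coeff p i * \<beta> ^ i) * b ^ n = constB (coeff p i) * ?c ^ i * b ^ (n - i)"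
      by (simp add: constB_mult constB_power power_mult_distrib algebra_simps)
  qed
  then have "H n p a b - constB (poly p \<beta>) * b ^ n
      = (\<Sum>i\<le>n. constB (coeff p i) * (a ^ i - ?c ^ i) * b ^ (n - i))"
    unfolding H_def by (simp add: sum_subtractf[symmetric] algebra_simps)
  also have "(a - ?c) dvd \<dots>"
  proof (rule dvd_sum)
    fix i
    have "(a - ?c) dvd (a ^ i - ?c ^ i)" unfolding power_diff_sumr2 by simp
    then show "(a - ?c) dvd constB (coeff p i) * (a ^ i - ?c ^ i) * b ^ (n - i)" by simp
  qed
  finally show ?thesis .
qed

lemma degree_fK: "k \<ge> 1 \<Longrightarrow> degree (fK k) = 1"
proof -
  assume k: "k \<ge> 1"
  have "coeff (monom 1 k :: complex poly) k \<noteq> coeff 1 k" using k by (simp add: coeff_monom coeff_1)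
  then have "monom 1 k \<noteq> (1 :: complex poly)" by metis
  then show ?thesis unfolding fK_explicit by simp
qed

lemma comp_case_b:
  assumes "degree p \<le> n"
  shows "H n p a (constB e) = comp (\<Sum>i\<le>n. monom (coeff p i * e ^ (n - i)) i) a"
    and "coeff p n \<noteq> 0 \<Longrightarrow> degree (\<Sum>i\<le>n. monom (coeff p i * e ^ (n - i)) i) = n"
proof -
  show "H n p a (constB e) = comp (\<Sum>i\<le>n. monom (coeff p i * e ^ (n - i)) i) a"
    unfolding H_def comp_sum comp_monom
    by (intro sum.cong refl) (simp add: constB_mult constB_power algebra_simps)
  let ?R = "\<Sum>i\<le>n. monom (coeff p i * e ^ (n - i)) i"
  have c: "coeff ?R j = (if j \<le> n then coeff p j * e ^ (n - j) else 0)" for j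
    by (simp add: coeff_sum coeff_monom)
  assume "coeff p n \<noteq> 0"
  show "degree ?R = n"
  proof (rule antisym)
    show "degree ?R \<le> n" by (rule degree_le) (simp add: c)
    show "n \<le> degree ?R" by (rule le_degree) (simp add: c \<open>coeff p n \<noteq> 0\<close>)
  qed
qed

lemma comp_case_a:
  assumes "degree p \<le> n" and a: "a = constB \<beta> * b + constB e"
  shows "H n p a b = comp (\<Sum>i\<le>n. smult (coeff p i) (monom 1 (n - i) * [:e, \<beta>:] ^ i)) b"
    and "poly p \<beta> \<noteq> 0 \<Longrightarrow> degree (\<Sum>i\<le>n. smult (coeff p i) (monom 1 (n - i) * [:e, \<beta>:] ^ i)) = n"
proof -
  show "H n p a b = comp (\<Sum>i\<le>n. smult (coeff p i) (monom 1 (n - i) * [:e, \<beta>:] ^ i)) b"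
    unfolding H_def comp_sum comp_smult comp_mult comp_monom comp_power comp_linear a
    by (intro sum.cong refl) (simp add: algebra_simps)
  let ?R = "\<Sum>i\<le>n. smult (coeff p i) (monom 1 (n - i) * [:e, \<beta>:] ^ i)"
  have cj: "coeff (monom 1 (n - i) * [:e, \<beta>:] ^ i) j = 0" if "i \<le> n" "j > n" for i j
  proof -
    have "coeff ([:e, \<beta>:] ^ i) (j - (n - i)) = 0"
      using degree_linear_power[of e \<beta> i] that by (intro coeff_eq_0) simp
    then show ?thesis using that by (simp add: coeff_monom_mult)
  qed
  have cn: "coeff (monom 1 (n - i) * [:e, \<beta>:] ^ i) n = \<beta> ^ i" if "i \<le> n" for i
    using that by (simp add: coeff_monom_mult coeff_linear_power)
  have pb: "poly p \<beta> = (\<Sum>i\<le>n. coeff p i * \<beta> ^ i)"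
    unfolding poly_altdef
    by (rule sum.mono_neutral_left) (use assms in \<open>auto simp: coeff_eq_0\<close>)
  have "coeff ?R n = poly p \<beta>" unfolding pb coeff_sum
    by (intro sum.cong refl) (simp add: cn)
  assume "poly p \<beta> \<noteq> 0"
  show "degree ?R = n"
  proof (rule antisym)
    show "degree ?R \<le> n" by (rule degree_le) (auto simp: coeff_sum cj)
    show "n \<le> degree ?R" by (rule le_degree) (simp add: \<open>coeff ?R n = poly p \<beta>\<close> \<open>poly p \<beta> \<noteq> 0\<close>)
  qed
qed


lemma const_unit_bpoly: "is_unit (u :: bpoly) \<Longrightarrow> \<exists>e. e \<noteq> 0 \<and> u = constB e"
  by (auto simp: is_unit_poly_iff constB_def dvd_field_iff)

lemma not_unit_linear: "\<not> is_unit [:- \<beta>, 1 :: complex:]"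
  by (simp add: is_unit_poly_iff)

lemma indecomp:
  assumes k: "k \<ge> 1"
  shows "indecomposable (ratfun (fK k))"
  unfolding indecomposable_def decomposable_def
proof
  assume "\<exists>(p::complex poly) (q::complex poly) h'. q \<noteq> 0 \<and> coprime p q \<and> max (degree p) (degree q) \<ge> 2 \<and>
      eval_at q h' \<noteq> 0 \<and> ratfun (fK k) = eval_at p h' / eval_at q h'"
  then obtain p q :: "complex poly" and h' where q0: "q \<noteq> 0" and cop: "coprime p q"
    and n2: "max (degree p) (degree q) \<ge> 2" and eq0: "eval_at q h' \<noteq> 0"
    and feq: "ratfun (fK k) = eval_at p h' / eval_at q h'" by blast
  define n where "n = max (degree p) (degree q)"
  have n2': "n \<ge> 2" and dp: "degree p \<le> n" and dq: "degree q \<le> n" using n2 by (auto simp: n_def)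
  obtain a0 b0 where h': "h' = Fraction_Field.Fract a0 b0" and b00: "b0 \<noteq> 0" by (rule Fract_cases)
  define g where "g = gcd a0 b0"
  define a where "a = a0 div g"
  define b where "b = b0 div g"
  have g0: "g \<noteq> 0" using b00 by (simp add: g_def)
  have a0: "a0 = a * g" and b0: "b0 = b * g" by (simp_all add: a_def b_def g_def)
  have b_ne: "b \<noteq> 0" using b00 b0 by auto
  have hab: "h' = Fraction_Field.Fract a b"
    unfolding h' using b00 b_ne by (simp add: eq_fract a0 b0)
  have cab: "coprime a b" unfolding a_def b_def g_def using b00 by (intro div_gcd_coprime) simp
  define P where "P = H n p a b"
  define Q where "Q = H n q a b"
  have rP: "ratfun P = ratfun b ^ n * eval_at p h'" unfolding P_def hab by (rule ratfun_H[OF b_ne dp])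
  have rQ: "ratfun Q = ratfun b ^ n * eval_at q h'" unfolding Q_def hab by (rule ratfun_H[OF b_ne dq])
  have rb: "ratfun b ^ n \<noteq> 0" using b_ne by simp
  have "ratfun Q \<noteq> 0" unfolding rQ using rb eq0 by simp
  then have Q0: "Q \<noteq> 0" by simp
  have "ratfun (fK k) * ratfun Q = ratfun P" unfolding feq rP rQ using eq0 by simp
  then have fQP: "fK k * Q = P" by (simp add: ratfun_mult[symmetric] ratfun_inj)
  have Qsplit: "Q = b ^ (n - degree q) * H (degree q) q a b"
    using H_shift[OF b_ne, of q "degree q" "n - degree q" a] dq unfolding Q_def by simp
  have root_ok: "poly p \<beta> \<noteq> 0" if "poly q \<beta> = 0" for \<beta>
  proof
    assume "poly p \<beta> = 0"
    then have "[:- \<beta>, 1:] dvd p" "[:- \<beta>, 1:] dvd q" using that by (simp_all add: poly_eq_0_iff_dvd)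
    then have "is_unit [:- \<beta>, 1:]" using cop by (rule coprime_common_divisor[rotated])
    then show False using not_unit_linear by blast
  qed
  have uQ: "is_unit Q"
  proof (rule ccontr)
    assume "\<not> is_unit Q"
    then obtain \<pi> where pi: "\<pi> dvd Q" "prime \<pi>" using Q0 prime_divisor_exists by blast
    have pinu: "\<not> is_unit \<pi>" using pi(2) by (simp add: prime_def prime_elem_def)
    have piP: "\<pi> dvd P" unfolding fQP[symmetric] using pi(1) by (rule dvd_mult)
    have notboth: False if "\<pi> dvd a" "\<pi> dvd b"
      using coprime_common_divisor[OF cab that] pinu by blast
    have "\<pi> dvd b ^ (n - degree q) \<or> \<pi> dvd H (degree q) q a b"
      using pi(1) unfolding Qsplit using prime_dvd_mult_iff[OF pi(2)] by blast
    then show False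
    proof
      assume h: "\<pi> dvd b ^ (n - degree q)"
      have "n - degree q \<noteq> 0"
      proof
        assume "n - degree q = 0"
        then have "is_unit \<pi>" using h by simp
        then show False using pinu by blast
      qed
      then have "degree q < n" by simp
      then have "degree p = n" using n_def by auto
      moreover have "p \<noteq> 0" using \<open>degree p = n\<close> n2' by auto
    ultimately have pn: "coeff p n \<noteq> 0" by (metis leading_coeff_0_iff)
      have pib: "\<pi> dvd b" using h pi(2) prime_dvd_power by blast
      obtain m where m: "n = Suc m" using n2' by (cases n) auto
      have "b dvd P - constB (coeff p n) * a ^ n" unfolding P_def m by (rule b_dvd_H)
      then have "\<pi> dvd P - constB (coeff p n) * a ^ n" using pib dvd_trans by blast
      then have "\<pi> dvd P - (P - constB (coeff p n) * a ^ n)" using piP by (rule dvd_diff[rotated])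
      then have "\<pi> dvd constB (coeff p n) * a ^ n" by simp
      then have "\<pi> dvd a ^ n" using constB_unit[OF pn] by (simp add: dvd_mult_unit_iff')
      then have "\<pi> dvd a" using pi(2) prime_dvd_power by blast
      then show False using notboth pib by blast
    next
      assume "\<pi> dvd H (degree q) q a b"
      then obtain \<beta> where \<beta>: "poly q \<beta> = 0" "\<pi> dvd a - constB \<beta> * b"
        using prime_dvd_H[OF b_ne pi(2) q0] by blast
      have pb: "poly p \<beta> \<noteq> 0" by (rule root_ok[OF \<beta>(1)])
      have "(a - constB \<beta> * b) dvd P - constB (poly p \<beta>) * b ^ n" unfolding P_def by (rule lin_dvd_H[OF dp])
      then have "\<pi> dvd P - constB (poly p \<beta>) * b ^ n" using \<beta>(2) dvd_trans by blast
      then have "\<pi> dvd P - (P - constB (poly p \<beta>) * b ^ n)" using piP by (rule dvd_diff[rotated])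
      then have "\<pi> dvd constB (poly p \<beta>) * b ^ n" by simp
      then have "\<pi> dvd b ^ n" using constB_unit[OF pb] by (simp add: dvd_mult_unit_iff')
      then have pib: "\<pi> dvd b" using pi(2) prime_dvd_power by blast
      then have "\<pi> dvd (a - constB \<beta> * b) + constB \<beta> * b" using \<beta>(2) by (intro dvd_add) simp_all
      then have "\<pi> dvd a" by simp
      then show False using notboth pib by blast
    qed
  qed
  obtain u where u: "u \<noteq> 0" "Q = constB u" using const_unit_bpoly[OF uQ] by blast
  have "degree P = degree (fK k * constB u)" using fQP u by simp
  also have "\<dots> = degree (fK k) + degree (constB u)"
    by (rule degree_mult_eq) (use k degree_fK[OF k] u in auto)
  also have "\<dots> = 1" using degree_fK[OF k] by (simp add: constB_def)
  finally have dP: "degree P = 1" .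
  show False
  proof (cases "degree q < n")
    case True
    then have "degree p = n" using n_def by auto
    moreover have "p \<noteq> 0" using \<open>degree p = n\<close> n2' by auto
    ultimately have pn: "coeff p n \<noteq> 0" by (metis leading_coeff_0_iff)
    have "b dvd b ^ (n - degree q)" using True by (intro dvd_power) simp
    also have "\<dots> dvd Q" unfolding Qsplit by (rule dvd_triv_left)
    finally have "is_unit b" using uQ dvd_unit_imp_unit by blast
    then obtain e where e: "e \<noteq> 0" "b = constB e" using const_unit_bpoly by blast
    let ?R = "\<Sum>i\<le>n. monom (coeff p i * e ^ (n - i)) i"
    have "P = comp ?R a" unfolding P_def e(2) by (rule comp_case_b(1)[OF dp])
    then have "degree P = n * degree a" using comp_case_b(2)[OF dp pn] degree_comp by simp
    then have "n * degree a = 1" using dP by simp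
    then show False using n2' by (simp add: nat_mult_eq_1_iff)
  next
    case False
    then have dqn: "degree q = n" using dq by simp
    then have "\<not> constant (poly q)" using n2' by (simp add: constant_degree)
    then obtain \<beta> where \<beta>: "poly q \<beta> = 0" using fundamental_theorem_of_algebra by blast
    then obtain q' where q': "q = [:- \<beta>, 1:] * q'" by (auto simp: poly_eq_0_iff_dvd elim: dvdE)
    have "q' \<noteq> 0" using q0 q' by auto
    then have "degree q = degree [:- \<beta>, 1:] + degree q'" unfolding q' by (intro degree_mult_eq) simp_all
    then have dq': "n = 1 + degree q'" using dqn by simp
    have F: "H (1 + degree q') ([:- \<beta>, 1:] * q') a b = H 1 [:- \<beta>, 1:] a b * H (degree q') q' a b"
      by (rule H_mult[OF b_ne]) simp_all
    have "Q = (a - constB \<beta> * b) * H (degree q') q' a b"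
      unfolding Q_def dq' q' F H_linear ..
    then have "(a - constB \<beta> * b) dvd Q" by simp
    then have "is_unit (a - constB \<beta> * b)" using uQ dvd_unit_imp_unit by blast
    then obtain e where e: "e \<noteq> 0" "a - constB \<beta> * b = constB e" using const_unit_bpoly by blast
    then have ae: "a = constB \<beta> * b + constB e" by (simp add: algebra_simps)
    let ?R = "\<Sum>i\<le>n. smult (coeff p i) (monom 1 (n - i) * [:e, \<beta>:] ^ i)"
    have "P = comp ?R b" unfolding P_def by (rule comp_case_a(1)[OF dp ae])
    then have "degree P = n * degree b" using comp_case_a(2)[OF dp ae root_ok[OF \<beta>]] degree_comp by simp
    then have "n * degree b = 1" using dP by simp
    then show False using n2' by (simp add: nat_mult_eq_1_iff)
  qed
qed


theorem mainTheorem6: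
  fixes k :: nat
  assumes "k \<ge> 1"
  defines "A \<equiv> varX ^ k - 1"
      and "B \<equiv> - (constB (of_nat k) * varX ^ (k - 1) * varY + 1)"
      and "f \<equiv> varY * (varX ^ k - 1) + varX"
  shows "poly_first_integral A B f \<and> indecomposable (ratfun f)
    \<and> calB A B = k
    \<and> ({proj_pt 1 \<omega> | \<omega>. \<omega> ^ k = 1} \<union> {proj_pt 0 1}) \<subseteq> spectrum_sigma f 1
    \<and> card ({proj_pt 1 \<omega> | \<omega>. \<omega> ^ k = 1} \<union> {proj_pt 0 1}) = k + 1
    \<and> spectrum_gamma f 1 = {proj_pt 0 1}
    \<and> calB A B + 1 \<le> card (spectrum_sigma f 1)
    \<and> card (spectrum_sigma f 1) < calB A B + 3"
proof -
  have fK: "f = fK k" unfolding f_def fK_def ..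
  have AK: "A = AK k" unfolding A_def AK_def ..
  have BK: "B = BK k" unfolding B_def BK_def ..
  have s: "spectrum_sigma f 1 = {proj_pt 1 \<omega> | \<omega>. \<omega> ^ k = 1} \<union> {proj_pt 0 1}"
    unfolding fK by (rule sigma_eq[OF assms(1)])
  have c: "card ({proj_pt 1 \<omega> | \<omega>. \<omega> ^ k = (1::complex)} \<union> {proj_pt 0 1}) = k + 1"
    by (rule card_points(2)[OF assms(1)])
  have cb: "calB A B = k" unfolding AK BK by (rule calB_k[OF assms(1)])
  show ?thesis
    using first_integral[OF assms(1)] indecomp[OF assms(1)] gamma_eq[OF assms(1)] s c cb
    unfolding fK[symmetric] AK[symmetric] BK[symmetric]
    by simp
qed

end
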